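(* Let $X\sim\zeta$ be a random variable on a measurable space $\mathcal{X}$, let $\hat{\mathcal{X}}$ be a measurable space and $d:\mathcal{X}\times\hat{\mathcal{X}}\to\mathbb{R}$ a measurable distortion function. Let $\eta$ be a probability distribution on $\mathcal{X}$ (possibly different from $\zeta$), let $b\in(0,\infty]$ and define for $\lambda\in(-b,0]$ \[ \phi(\lambda)=\sup_{\hat x\in\hat{\mathcal{X}}}\log\mathbb{E}_{X\sim\eta}\big[e^{\lambda d(X,\hat x)}\big]. \] Then for every $r\ge 0$, \[ \inf_{P_{\hat X|X}:\ I(\hat X;X)\le r}\mathbb{E}\big[d(X,\hat X)\big]\ \ge\ \sup_{-b<\lambda<0}\left\{\frac1\lambda\big[r+D(\zeta\|\eta)\big]+\frac1\lambda\phi(\lambda)\right\}, \] where the infimum is over Markov kernels $P_{\hat X|X}$ from $\mathcal{X}$ to $\hat{\mathcal{X}}$ with $X\sim\zeta$.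
   Context: $D(\cdot\|\cdot)$ is the Kullback–Leibler divergence and $I(\cdot;\cdot)$ mutual information. Expectations $\mathbb{E}[d(X,\hat X)]$ are assumed well defined. *)

theory Defs
  imports "HOL-Probability.Probability"
begin

definition ln_ennreal :: "ennreal \<Rightarrow> ereal" where
  "ln_ennreal x = (if x = \<infinity> then \<infinity> else if x = 0 then - \<infinity> else ereal (ln (enn2real x)))"

text \<open>Since f ln f \<ge> -1/e, the integral is computed as a
  nonnegative integral of f ln f + 1/e minus 1/e (Q is a probability measure).\<close>
definition kl_div :: "'a measure \<Rightarrow> 'a measure \<Rightarrow> ereal" where
  "kl_div P Q = (if absolutely_continuous Q P then
     (let f = (\<lambda>x. enn2real (RN_deriv Q P x)) in
       enn2ereal (\<integral>\<^sup>+ x. ennreal (f x * ln (f x) + exp (-1)) \<partial>Q) - ereal (exp (-1)))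
   else \<infinity>)"

definition joint :: "'a measure \<Rightarrow> 'b measure \<Rightarrow> ('a \<Rightarrow> 'b measure) \<Rightarrow> ('a \<times> 'b) measure" where
  "joint mu Y K = mu \<bind> (\<lambda>x. distr (K x) (mu \<Otimes>\<^sub>M Y) (\<lambda>y. (x, y)))"

definition mutual_info :: "'a measure \<Rightarrow> 'b measure \<Rightarrow> ('a \<Rightarrow> 'b measure) \<Rightarrow> ereal" where
  "mutual_info mu Y K = kl_div (joint mu Y K) (mu \<Otimes>\<^sub>M distr (joint mu Y K) Y snd)"

definition expect_defined :: "'c measure \<Rightarrow> ('c \<Rightarrow> real) \<Rightarrow> bool" where
  "expect_defined M f \<longleftrightarrow>
     (\<integral>\<^sup>+ z. ennreal (f z) \<partial>M) \<noteq> \<infinity> \<or> (\<integral>\<^sup>+ z. ennreal (- f z) \<partial>M) \<noteq> \<infinity>"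

definition ereal_expect :: "'c measure \<Rightarrow> ('c \<Rightarrow> real) \<Rightarrow> ereal" where
  "ereal_expect M f = enn2ereal (\<integral>\<^sup>+ z. ennreal (f z) \<partial>M) - enn2ereal (\<integral>\<^sup>+ z. ennreal (- f z) \<partial>M)"

definition phi :: "'a measure \<Rightarrow> 'b measure \<Rightarrow> ('a \<times> 'b \<Rightarrow> real) \<Rightarrow> real \<Rightarrow> ereal" where
  "phi eta Y d l = (SUP y \<in> space Y. ln_ennreal (\<integral>\<^sup>+ x. ennreal (exp (l * d (x, y))) \<partial>eta))"

end

theory Submission
  imports Defs
begin

lemma fenchel:
  fixes w t :: real assumes "0 \<le> w"
  shows "w * t \<le> w * ln w - w + exp t"
proof (cases "w = 0")
  case True then show ?thesis by simp
next
  case False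
  then have w: "w > 0" using assms by simp
  have "1 + (t - ln w) \<le> exp (t - ln w)" by (rule exp_ge_add_one_self)
  also have "exp (t - ln w) = exp t / w" using w by (simp add: exp_diff)
  finally have "(1 + (t - ln w)) * w \<le> exp t" using w by (simp add: pos_le_divide_eq)
  then show ?thesis using w by (simp add: algebra_simps)
qed

lemma xlnx_ge:
  fixes x :: real assumes "0 \<le> x"
  shows "- exp (-1) \<le> x * ln x"
  using fenchel[OF assms, of "-1"] by simp

lemma ennreal_split_aux:
  fixes a c :: real assumes "0 \<le> c" "0 \<le> a + c"
  shows "ennreal (a + c) + ennreal (- a) = ennreal a + ennreal c"
proof (cases "a \<ge> 0")
  case True then show ?thesis using assms by (simp add: ennreal_plus ennreal_neg)
next
  case False then show ?thesis using assms by (subst ennreal_plus[symmetric]) (auto simp: ennreal_neg)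
qed

lemma ereal_aux: "(a::ereal) + ereal q = b + ereal c \<Longrightarrow> a - ereal c = b - ereal q"
  by (cases a; cases b) simp_all

lemma kl_parts:
  assumes M: "prob_space M" and N: "prob_space N" and sets: "sets N = sets M"
    and ac: "absolutely_continuous M N"
  defines "f \<equiv> \<lambda>x. enn2real (RN_deriv M N x)"
  shows "N = density M (\<lambda>x. ennreal (f x))"
    and "f \<in> borel_measurable M"
    and "(\<integral>\<^sup>+ x. ennreal (-(f x * ln (f x))) \<partial>M) \<le> ennreal (exp (-1))"
    and "kl_div N M = enn2ereal (\<integral>\<^sup>+ x. ennreal (f x * ln (f x)) \<partial>M)
                     - enn2ereal (\<integral>\<^sup>+ x. ennreal (-(f x * ln (f x))) \<partial>M)"
proof -
  interpret M: prob_space M by fact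
  interpret N: prob_space N by fact
  have fin: "AE x in M. RN_deriv M N x \<noteq> \<infinity>"
    by (rule M.RN_deriv_finite[OF _ ac sets]) unfold_locales
  have "density M (\<lambda>x. ennreal (f x)) = density M (RN_deriv M N)"
    using fin by (intro density_cong) (auto simp: f_def ennreal_enn2real_if)
  also have "\<dots> = N" by (rule M.density_RN_deriv[OF ac sets])
  finally show dens: "N = density M (\<lambda>x. ennreal (f x))" ..
  show fm: "f \<in> borel_measurable M" unfolding f_def by measurable
  have fnn: "\<And>x. 0 \<le> f x" unfolding f_def by simp
  have "(\<integral>\<^sup>+ x. ennreal (-(f x * ln (f x))) \<partial>M) \<le> (\<integral>\<^sup>+ x. ennreal (exp (-1)) \<partial>M)"
    using xlnx_ge[OF fnn] by (intro nn_integral_mono ennreal_leI) (smt (verit))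
  also have "\<dots> = ennreal (exp (-1))" by (simp add: M.emeasure_space_1)
  finally show neg: "(\<integral>\<^sup>+ x. ennreal (-(f x * ln (f x))) \<partial>M) \<le> ennreal (exp (-1))" .
  let ?S = "\<integral>\<^sup>+ x. ennreal (f x * ln (f x) + exp (-1)) \<partial>M"
  let ?P = "\<integral>\<^sup>+ x. ennreal (f x * ln (f x)) \<partial>M"
  let ?Q = "\<integral>\<^sup>+ x. ennreal (-(f x * ln (f x))) \<partial>M"
  have "?S + ?Q = (\<integral>\<^sup>+ x. ennreal (f x * ln (f x) + exp (-1)) + ennreal (-(f x * ln (f x))) \<partial>M)"
    using fm by (intro nn_integral_add[symmetric]) auto
  also have "\<dots> = (\<integral>\<^sup>+ x. ennreal (f x * ln (f x)) + ennreal (exp (-1)) \<partial>M)"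
    using xlnx_ge[OF fnn] by (intro nn_integral_cong ennreal_split_aux) (auto, smt (verit))
  also have "\<dots> = ?P + ennreal (exp (-1))"
    using fm by (subst nn_integral_add) (auto simp: M.emeasure_space_1)
  finally have eq: "?S + ?Q = ?P + ennreal (exp (-1))" .
  have kl: "kl_div N M = enn2ereal ?S - ereal (exp (-1))"
    using ac unfolding kl_div_def f_def by (simp add: Let_def)
  have Qfin: "?Q \<noteq> \<infinity>" using neg by (auto simp: top_unique)
  from eq have "enn2ereal ?S + enn2ereal ?Q = enn2ereal ?P + ereal (exp (-1))"
    by (metis enn2ereal_ennreal exp_ge_zero less_imp_le plus_ennreal.rep_eq exp_gt_zero)
  then show "kl_div N M = enn2ereal ?P - enn2ereal ?Q"
  proof -
    have Qr: "enn2ereal ?Q = ereal (enn2real ?Q)"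
      using Qfin by (cases ?Q) (auto simp: enn2real_ennreal)
    show ?thesis unfolding kl using \<open>enn2ereal ?S + enn2ereal ?Q = enn2ereal ?P + ereal (exp (-1))\<close>
      unfolding Qr by (rule ereal_aux)
  qed
qed

lemma joint_facts:
  fixes zeta :: "'a measure" and Y :: "'b measure"
  assumes Z: "prob_space zeta" and K: "K \<in> zeta \<rightarrow>\<^sub>M prob_algebra Y"
  shows "prob_space (joint zeta Y K)" and "sets (joint zeta Y K) = sets (zeta \<Otimes>\<^sub>M Y)"
    and "\<And>g::'a \<Rightarrow> ennreal. g \<in> borel_measurable zeta \<Longrightarrow> (\<integral>\<^sup>+ z. g (fst z) \<partial>joint zeta Y K) = (\<integral>\<^sup>+ x. g x \<partial>zeta)"
proof -
  interpret Z: prob_space zeta by fact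
  let ?Kp = "\<lambda>x. distr (K x) (zeta \<Otimes>\<^sub>M Y) (\<lambda>y. (x, y))"
  have Kp: "?Kp \<in> zeta \<rightarrow>\<^sub>M prob_algebra (zeta \<Otimes>\<^sub>M Y)"
    by (rule measurable_distr_prob_space2[OF K]) simp
  have zs: "zeta \<in> space (prob_algebra zeta)" by (simp add: space_prob_algebra Z.prob_space_axioms)
  show "prob_space (joint zeta Y K)" unfolding joint_def by (rule prob_space_bind'[OF zs Kp])
  show "sets (joint zeta Y K) = sets (zeta \<Otimes>\<^sub>M Y)" unfolding joint_def by (rule sets_bind'[OF zs Kp])
  fix g :: "'a \<Rightarrow> ennreal" assume g[measurable]: "g \<in> borel_measurable zeta"
  have "(\<integral>\<^sup>+ z. g (fst z) \<partial>joint zeta Y K) = (\<integral>\<^sup>+ x. \<integral>\<^sup>+ z. g (fst z) \<partial>?Kp x \<partial>zeta)"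
    unfolding joint_def by (rule nn_integral_bind[OF _ measurable_prob_algebraD[OF Kp]]) measurable
  also have "\<dots> = (\<integral>\<^sup>+ x. g x \<partial>zeta)"
  proof (intro nn_integral_cong)
    fix x assume x: "x \<in> space zeta"
    then have Kx: "prob_space (K x)" "sets (K x) = sets Y"
      using measurable_space[OF K x] by (auto simp: space_prob_algebra)
    have "(\<integral>\<^sup>+ z. g (fst z) \<partial>?Kp x) = (\<integral>\<^sup>+ y. g x \<partial>K x)"
      using x Kx by (subst nn_integral_distr) (auto cong: measurable_cong_sets)
    also have "\<dots> = g x" using Kx by (simp add: prob_space.emeasure_space_1)
    finally show "(\<integral>\<^sup>+ z. g (fst z) \<partial>?Kp x) = g x" .
  qed
  finally show "(\<integral>\<^sup>+ z. g (fst z) \<partial>joint zeta Y K) = (\<integral>\<^sup>+ x. g x \<partial>zeta)" .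
qed

lemma pointwise_real:
  fixes q p l dd F :: real assumes "q \<ge> 0" "p \<ge> 0" "l < 0"
  shows "q*(p*(max 0 (-l*(-dd)) + max 0 (-F) + max 0 (-ln q) + 1)) + q*max 0 (-(p*ln p))
     \<le> q*(p*(max 0 (-l*dd) + max 0 F + max 0 (ln q))) + q*max 0 (p*ln p) + exp (l*dd - F)"
proof -
  have e: "0 \<le> exp (l*dd - F)" by simp
  consider "q = 0" | "p = 0" | "q > 0" "p > 0" using assms by linarith
  then show ?thesis
  proof cases
    case 1 then show ?thesis using e by simp
  next
    case 2 then show ?thesis using e assms by simp
  next
    case 3
    let ?w = "q * p"
    have f: "?w * (l*dd - F) \<le> ?w * ln ?w - ?w + exp (l*dd - F)"
      by (rule fenchel) (use 3 in simp)
    have lw: "?w * ln ?w = q * (p * ln p) + ?w * ln q" using 3 by (simp add: ln_mult algebra_simps)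
    have m: "\<And>x::real. max 0 x - max 0 (-x) = x" by auto
    have "q*(p*(max 0 (-l*dd) + max 0 F + max 0 (ln q))) + q*max 0 (p*ln p) + exp (l*dd - F)
        - (q*(p*(max 0 (-l*(-dd)) + max 0 (-F) + max 0 (-ln q) + 1)) + q*max 0 (-(p*ln p)))
        = ?w * (max 0 (-l*dd) - max 0 (-(-l*dd))) + ?w * (max 0 F - max 0 (-F))
          + ?w * (max 0 (ln q) - max 0 (- ln q)) + q * (max 0 (p*ln p) - max 0 (-(p*ln p))) - ?w + exp (l*dd - F)"
      by (simp add: algebra_simps)
    also have "\<dots> = ?w * (-l*dd) + ?w * F + ?w * ln q + q * (p * ln p) - ?w + exp (l*dd - F)"
      unfolding m ..
    also have "\<dots> \<ge> 0" using f lw by (simp add: algebra_simps)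
    finally show ?thesis by simp
  qed
qed

lemma ennreal_max0: "ennreal (max 0 x) = ennreal x"
  by (cases "x \<ge> 0") (auto simp: ennreal_neg)

lemma fin_real: "(X::ennreal) \<noteq> \<infinity> \<Longrightarrow> X = ennreal (enn2real X) \<and> 0 \<le> enn2real X"
  by (cases X) (auto simp: enn2real_ennreal)

lemma sum5: "0\<le>a \<Longrightarrow> 0\<le>b \<Longrightarrow> 0\<le>c \<Longrightarrow> 0\<le>e \<Longrightarrow> 0\<le>f \<Longrightarrow>
   ennreal (a+b+c+e+f) = ennreal a + ennreal b + ennreal c + ennreal e + ennreal f"
  by (simp add: ennreal_plus)

lemma final_arith:
  fixes Em Ep Cm Cp Am Ap T :: ennreal and l F D r :: real
  assumes l: "l < 0"
    and main: "ennreal (-l) * Em + ennreal (-F) + Cm + 1 + Am \<le> ennreal (-l) * Ep + ennreal F + Cp + Ap + T"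
    and T: "T \<le> 1"
    and C: "enn2ereal Cp - enn2ereal Cm = ereal D" and A: "enn2ereal Ap - enn2ereal Am \<le> ereal r"
    and Cm: "Cm \<noteq> \<infinity>" and Am: "Am \<noteq> \<infinity>"
  shows "ereal (1/l) * (ereal r + ereal D) + ereal (1/l) * ereal F \<le> enn2ereal Ep - enn2ereal Em"
proof (cases "Ep = \<infinity>")
  case True then show ?thesis by simp
next
  case False
  have Tf: "T \<noteq> \<infinity>" using T by (auto simp: top_unique)
  have Cpf: "Cp \<noteq> \<infinity>" using C Cm by (auto dest!: fin_real)
  have Apf: "Ap \<noteq> \<infinity>" using A Am by (auto dest!: fin_real)
  have rhsf: "ennreal (-l) * Ep + ennreal F + Cp + Ap + T \<noteq> \<infinity>"
    using False Cpf Apf Tf by (simp add: ennreal_mult_eq_top_iff)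
  have Emf: "Em \<noteq> \<infinity>"
  proof
    assume "Em = \<infinity>"
    then have inf: "ennreal (-l) * Em + ennreal (-F) + Cm + 1 + Am = \<infinity>" using l by simp
    show False using main rhsf unfolding inf by (simp add: top_unique)
  qed
  obtain em ep cm cp am ap t where
    e: "Em = ennreal em" "Ep = ennreal ep" "Cm = ennreal cm" "Cp = ennreal cp" "Am = ennreal am"
       "Ap = ennreal ap" "T = ennreal t"
    and nn: "0 \<le> em" "0 \<le> ep" "0 \<le> cm" "0 \<le> cp" "0 \<le> am" "0 \<le> ap" "0 \<le> t"
    using fin_real[OF Emf] fin_real[OF False] fin_real[OF Cm] fin_real[OF Cpf] fin_real[OF Am]
      fin_real[OF Apf] fin_real[OF Tf] by blast
  have m2: "ennreal (-l * em + max 0 (-F) + cm + 1 + am) \<le> ennreal (-l * ep + max 0 F + cp + ap + t)"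
  proof -
    have a: "ennreal (-l * em + max 0 (-F) + cm + 1 + am) = ennreal (-l) * ennreal em + ennreal (-F) + ennreal cm + 1 + ennreal am"
      using l nn by (subst sum5) (simp_all add: ennreal_max0 mult_nonpos_nonneg ennreal_mult'[symmetric])
    have b: "ennreal (-l * ep + max 0 F + cp + ap + t) = ennreal (-l) * ennreal ep + ennreal F + ennreal cp + ennreal ap + ennreal t"
      using l nn by (subst sum5) (simp_all add: ennreal_max0 mult_nonpos_nonneg ennreal_mult'[symmetric])
    show ?thesis unfolding a b using main unfolding e .
  qed
  then have m: "-l * em + max 0 (-F) + cm + 1 + am \<le> -l * ep + max 0 F + cp + ap + t"
  proof -
    have "0 \<le> -l * ep + max 0 F + cp + ap + t" using l nn mult_nonpos_nonneg[of l ep] by simp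
    then show ?thesis using m2 by simp
  qed
  have t1: "t \<le> 1" using T unfolding e by simp
  have cd: "cp - cm = D" using C nn unfolding e by simp
  have ar: "ap - am \<le> r" using A nn unfolding e by simp
  have key: "l * (ep - em) \<le> r + D + F" using m t1 cd ar by (cases "F \<ge> 0") (simp_all add: algebra_simps max_def split: if_splits)
  have "(r + D + F) / l \<le> ep - em" using key l by (simp add: neg_divide_le_eq mult.commute)
  then show ?thesis using nn unfolding e by (simp add: field_simps add_divide_distrib)
qed

lemma convL:
  fixes q p L x b c e :: real assumes "0\<le>q" "0\<le>p" "0\<le>L"
  shows "ennreal q * (ennreal p * (ennreal L * ennreal x + ennreal b + ennreal c + 1)) + ennreal q * ennreal e
    = ennreal (q*(p*(max 0 (L*x) + max 0 b + max 0 c + 1)) + q * max 0 e)"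
proof -
  have "max 0 (L*x) = L * max 0 x" using assms by (simp add: max_mult_distrib_left)
  then show ?thesis using assms
    by (simp add: ennreal_mult ennreal_plus ennreal_max0 add_nonneg_nonneg)
qed
lemma convR:
  fixes q p L x b c e w :: real assumes "0\<le>q" "0\<le>p" "0\<le>L" "0 \<le> w"
  shows "ennreal q * (ennreal p * (ennreal L * ennreal x + ennreal b + ennreal c)) + ennreal q * ennreal e + ennreal w
    = ennreal (q*(p*(max 0 (L*x) + max 0 b + max 0 c)) + q * max 0 e + w)"
proof -
  have "max 0 (L*x) = L * max 0 x" using assms by (simp add: max_mult_distrib_left)
  then show ?thesis using assms
    by (simp add: ennreal_mult ennreal_plus ennreal_max0 add_nonneg_nonneg)
qed
lemma T_bound:
  fixes eta :: "'a measure" and Q Y :: "'b measure" and d :: "'a \<times> 'b \<Rightarrow> real"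
  assumes E: "prob_space eta" and QP: "prob_space Q" and dEQ[measurable]: "d \<in> borel_measurable (eta \<Otimes>\<^sub>M Q)"
    and F: "phi eta Y d l = ereal F" and sQ: "sets Q = sets Y"
  shows "(\<integral>\<^sup>+z. ennreal (exp (l * d z - F)) \<partial>(eta \<Otimes>\<^sub>M Q)) \<le> 1"
proof -
  interpret E: prob_space eta by fact
  interpret Q: prob_space Q by fact
  interpret EQ: pair_sigma_finite eta Q by unfold_locales
  have "(\<integral>\<^sup>+z. ennreal (exp (l * d z - F)) \<partial>(eta \<Otimes>\<^sub>M Q)) = (\<integral>\<^sup>+y. \<integral>\<^sup>+x. ennreal (exp (l * d (x, y) - F)) \<partial>eta \<partial>Q)"
    by (rule EQ.nn_integral_snd[symmetric]) measurable
  also have "\<dots> \<le> (\<integral>\<^sup>+y. 1 \<partial>Q)"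
  proof (rule nn_integral_mono)
    fix y assume y: "y \<in> space Q"
    then have yY: "y \<in> space Y" using sets_eq_imp_space_eq[OF sQ] by simp
    have dy[measurable]: "(\<lambda>x. d (x, y)) \<in> borel_measurable eta"
      by (rule measurable_compose[OF measurable_Pair[OF measurable_ident_sets[OF refl] measurable_const[OF y]] dEQ])
    let ?I = "\<integral>\<^sup>+x. ennreal (exp (l * d (x, y))) \<partial>eta"
    have "ln_ennreal ?I \<le> phi eta Y d l" unfolding phi_def using yY by (rule SUP_upper)
    then have lnI: "ln_ennreal ?I \<le> ereal F" using F by simp
    have Ile: "?I \<le> ennreal (exp F)"
    proof (cases ?I)
      case (real v)
      show ?thesis
      proof (cases "v = 0")
        case False
        then have "ln v \<le> F" using lnI real by (simp add: ln_ennreal_def)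
        moreover have "0 < v" using False real by simp
        ultimately have "v \<le> exp F" by (metis exp_le_cancel_iff exp_ln)
        then show ?thesis using real by simp
      qed (use real in simp)
    next
      case top then show ?thesis using lnI by (simp add: ln_ennreal_def)
    qed
    have "(\<integral>\<^sup>+x. ennreal (exp (l * d (x, y) - F)) \<partial>eta) = (\<integral>\<^sup>+x. ennreal (exp (-F)) * ennreal (exp (l * d (x, y))) \<partial>eta)"
      by (intro nn_integral_cong) (simp add: ennreal_mult[symmetric] exp_diff exp_minus field_simps)
    also have "\<dots> = ennreal (exp (-F)) * ?I" by (rule nn_integral_cmult) measurable
    also have "\<dots> \<le> ennreal (exp (-F)) * ennreal (exp F)" using Ile by (rule mult_left_mono) simp
    also have "\<dots> = 1" by (simp add: ennreal_mult[symmetric] exp_minus)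
    finally show "(\<integral>\<^sup>+x. ennreal (exp (l * d (x, y) - F)) \<partial>eta) \<le> 1" .
  qed
  also have "\<dots> = 1" by (simp add: Q.emeasure_space_1)
  finally show ?thesis .
qed

lemma core:
  fixes zeta eta :: "'a measure" and Y :: "'b measure" and d :: "'a \<times> 'b \<Rightarrow> real"
  assumes Z: "prob_space zeta" and E: "prob_space eta" and sE: "sets eta = sets zeta"
    and dm: "d \<in> borel_measurable (zeta \<Otimes>\<^sub>M Y)"
    and K: "K \<in> zeta \<rightarrow>\<^sub>M prob_algebra Y" and MI: "mutual_info zeta Y K \<le> ereal r"
    and l: "l < 0" and D: "kl_div zeta eta = ereal D" and F: "phi eta Y d l = ereal F"
  shows "ereal (1/l) * (ereal r + ereal D) + ereal (1/l) * ereal F \<le> ereal_expect (joint zeta Y K) d"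
proof -
  interpret Z: prob_space zeta by fact
  interpret E: prob_space eta by fact
  define P where "P = joint zeta Y K"
  define Q where "Q = distr P Y snd"
  have PP: "prob_space P" and sP: "sets P = sets (zeta \<Otimes>\<^sub>M Y)"
    and marg: "\<And>g::'a \<Rightarrow> ennreal. g \<in> borel_measurable zeta \<Longrightarrow> (\<integral>\<^sup>+ z. g (fst z) \<partial>P) = (\<integral>\<^sup>+ x. g x \<partial>zeta)"
    using joint_facts[OF Z K] unfolding P_def by auto
  interpret P: prob_space P by fact
  have sndm: "snd \<in> P \<rightarrow>\<^sub>M Y" using measurable_snd by (simp add: measurable_cong_sets[OF sP refl])
  have QP: "prob_space Q" unfolding Q_def by (rule P.prob_space_distr[OF sndm])
  have sQ: "sets Q = sets Y" unfolding Q_def by simp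
  interpret Q: prob_space Q by fact
  interpret EQ: pair_sigma_finite eta Q by unfold_locales
  have sZQ: "sets (zeta \<Otimes>\<^sub>M Q) = sets (zeta \<Otimes>\<^sub>M Y)" using sQ by (rule sets_pair_measure_cong[OF refl])
  have sEQ: "sets (eta \<Otimes>\<^sub>M Q) = sets (zeta \<Otimes>\<^sub>M Y)" using sQ sE by (rule sets_pair_measure_cong[OF _ _, rotated])
  have ZQ: "prob_space (zeta \<Otimes>\<^sub>M Q)" by (rule prob_space_pair[OF Z QP])
  have ac1: "absolutely_continuous eta zeta" using D by (auto simp: kl_div_def split: if_splits)
  have MI': "mutual_info zeta Y K = kl_div P (zeta \<Otimes>\<^sub>M Q)" unfolding mutual_info_def P_def Q_def ..
  have ac2: "absolutely_continuous (zeta \<Otimes>\<^sub>M Q) P" using MI unfolding MI'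
    by (auto simp: kl_div_def split: if_splits)
  define q where "q = (\<lambda>x. enn2real (RN_deriv eta zeta x))"
  define p where "p = (\<lambda>z. enn2real (RN_deriv (zeta \<Otimes>\<^sub>M Q) P z))"
  note k1 = kl_parts[OF E Z sE[symmetric] ac1, folded q_def]
  note k2 = kl_parts[OF ZQ PP trans[OF sP sZQ[symmetric]] ac2, folded p_def]
  have qm[measurable]: "q \<in> borel_measurable eta" by (rule k1(2))
  have pm[measurable]: "p \<in> borel_measurable (zeta \<Otimes>\<^sub>M Q)" by (rule k2(2))
  note [measurable] = dm
  note [measurable_cong] = sE sQ sP
  have qnn: "\<And>x. 0 \<le> q x" and pnn: "\<And>z. 0 \<le> p z" by (simp_all add: q_def p_def)
  have dz: "zeta = density eta (\<lambda>x. ennreal (q x))" using k1(1) unfolding q_def by simp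
  have dP: "P = density (zeta \<Otimes>\<^sub>M Q) (\<lambda>z. ennreal (p z))" using k2(1) unfolding p_def by simp
  have prodd: "zeta \<Otimes>\<^sub>M Q = density (eta \<Otimes>\<^sub>M Q) (\<lambda>z. ennreal (q (fst z)))"
  proof -
    have "zeta \<Otimes>\<^sub>M Q = density eta (\<lambda>x. ennreal (q x)) \<Otimes>\<^sub>M density Q (\<lambda>_. 1)"
      by (subst dz) (simp only: density_1)
    also have "\<dots> = density (eta \<Otimes>\<^sub>M Q) (\<lambda>(x,y). ennreal (q x) * 1)"
      by (rule pair_measure_density) (auto simp: density_1 intro: Q.sigma_finite_measure_axioms)
    also have "\<dots> = density (eta \<Otimes>\<^sub>M Q) (\<lambda>z. ennreal (q (fst z)))"
      by (intro density_cong) (auto simp: split_beta')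
    finally show ?thesis .
  qed
  have intEQ: "(\<integral>\<^sup>+z. ennreal (q (fst z)) * h z \<partial>(eta \<Otimes>\<^sub>M Q)) = (\<integral>\<^sup>+z. h z \<partial>(zeta \<Otimes>\<^sub>M Q))"
    if h: "h \<in> borel_measurable (zeta \<Otimes>\<^sub>M Q)" for h
  proof -
    have h': "h \<in> borel_measurable (eta \<Otimes>\<^sub>M Q)" using h by (simp add: measurable_cong_sets[OF sEQ[unfolded sZQ[symmetric]] refl])
    show ?thesis by (subst prodd) (simp add: nn_integral_density h')
  qed
  have intP: "(\<integral>\<^sup>+z. ennreal (p z) * h z \<partial>(zeta \<Otimes>\<^sub>M Q)) = (\<integral>\<^sup>+z. h z \<partial>P)"
    if h: "h \<in> borel_measurable P" for h
  proof -
    have h': "h \<in> borel_measurable (zeta \<Otimes>\<^sub>M Q)" using h by (simp add: measurable_cong_sets[OF trans[OF sP sZQ[symmetric]] refl])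
    show ?thesis by (subst dP) (simp add: nn_integral_density h')
  qed
  have intZ: "(\<integral>\<^sup>+x. g x \<partial>zeta) = (\<integral>\<^sup>+x. ennreal (q x) * g x \<partial>eta)"
    if g: "g \<in> borel_measurable zeta" for g
  proof -
    have g': "g \<in> borel_measurable eta" using g by (simp add: measurable_cong_sets[OF sE refl])
    show ?thesis by (subst dz) (simp add: nn_integral_density g')
  qed
  define Em where "Em = (\<integral>\<^sup>+z. ennreal (- d z) \<partial>P)"
  define Ep where "Ep = (\<integral>\<^sup>+z. ennreal (d z) \<partial>P)"
  define Cm where "Cm = (\<integral>\<^sup>+x. ennreal (-(q x * ln (q x))) \<partial>eta)"
  define Cp where "Cp = (\<integral>\<^sup>+x. ennreal (q x * ln (q x)) \<partial>eta)"
  have dPm[measurable]: "d \<in> borel_measurable P" using dm by (simp add: measurable_cong_sets[OF sP refl])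
  have G1: "(\<integral>\<^sup>+z. ennreal (-l) * ennreal (- d z) + ennreal (-F) + ennreal (- ln (q (fst z))) + 1 \<partial>P)
      = ennreal (-l) * Em + ennreal (-F) + Cm + 1"
  proof -
    have "(\<integral>\<^sup>+z. ennreal (-l) * ennreal (- d z) + ennreal (-F) + ennreal (- ln (q (fst z))) + 1 \<partial>P)
      = (\<integral>\<^sup>+z. ennreal (-l) * ennreal (- d z) \<partial>P) + (\<integral>\<^sup>+z. ennreal (-F) \<partial>P) + (\<integral>\<^sup>+z. ennreal (- ln (q (fst z))) \<partial>P) + (\<integral>\<^sup>+z. 1 \<partial>P)"
      by (subst nn_integral_add, measurable)+
    also have "(\<integral>\<^sup>+z. ennreal (-l) * ennreal (- d z) \<partial>P) = ennreal (-l) * Em"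
      unfolding Em_def by (rule nn_integral_cmult) measurable
    also have "(\<integral>\<^sup>+z. ennreal (- ln (q (fst z))) \<partial>P) = (\<integral>\<^sup>+x. ennreal (- ln (q x)) \<partial>zeta)"
      by (rule marg) measurable
    also have "\<dots> = (\<integral>\<^sup>+x. ennreal (q x) * ennreal (- ln (q x)) \<partial>eta)"
      by (rule intZ) measurable
    also have "\<dots> = Cm" unfolding Cm_def
      by (intro nn_integral_cong) (simp add: ennreal_mult'[symmetric] qnn)
    finally show ?thesis by (simp add: P.emeasure_space_1)
  qed
  have G2: "(\<integral>\<^sup>+z. ennreal (-l) * ennreal (d z) + ennreal F + ennreal (ln (q (fst z))) \<partial>P)
      = ennreal (-l) * Ep + ennreal F + Cp"
  proof -
    have "(\<integral>\<^sup>+z. ennreal (-l) * ennreal (d z) + ennreal F + ennreal (ln (q (fst z))) \<partial>P)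
      = (\<integral>\<^sup>+z. ennreal (-l) * ennreal (d z) \<partial>P) + (\<integral>\<^sup>+z. ennreal F \<partial>P) + (\<integral>\<^sup>+z. ennreal (ln (q (fst z))) \<partial>P)"
      by (subst nn_integral_add, measurable)+
    also have "(\<integral>\<^sup>+z. ennreal (-l) * ennreal (d z) \<partial>P) = ennreal (-l) * Ep"
      unfolding Ep_def by (rule nn_integral_cmult) measurable
    also have "(\<integral>\<^sup>+z. ennreal (ln (q (fst z))) \<partial>P) = (\<integral>\<^sup>+x. ennreal (ln (q x)) \<partial>zeta)"
      by (rule marg) measurable
    also have "\<dots> = (\<integral>\<^sup>+x. ennreal (q x) * ennreal (ln (q x)) \<partial>eta)"
      by (rule intZ) measurable
    also have "\<dots> = Cp" unfolding Cp_def
      by (intro nn_integral_cong) (simp add: ennreal_mult'[symmetric] qnn)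
    finally show ?thesis by (simp add: P.emeasure_space_1)
  qed
  define Am where "Am = (\<integral>\<^sup>+z. ennreal (-(p z * ln (p z))) \<partial>(zeta \<Otimes>\<^sub>M Q))"
  define Ap where "Ap = (\<integral>\<^sup>+z. ennreal (p z * ln (p z)) \<partial>(zeta \<Otimes>\<^sub>M Q))"
  define T where "T = (\<integral>\<^sup>+z. ennreal (exp (l * d z - F)) \<partial>(eta \<Otimes>\<^sub>M Q))"
  have LI: "(\<integral>\<^sup>+z. ennreal (q (fst z)) * (ennreal (p z) * (ennreal (-l) * ennreal (- d z) + ennreal (-F) + ennreal (- ln (q (fst z))) + 1))
              + ennreal (q (fst z)) * ennreal (-(p z * ln (p z))) \<partial>(eta \<Otimes>\<^sub>M Q))
      = (ennreal (-l) * Em + ennreal (-F) + Cm + 1) + Am"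
  proof -
    have "(\<integral>\<^sup>+z. ennreal (q (fst z)) * (ennreal (p z) * (ennreal (-l) * ennreal (- d z) + ennreal (-F) + ennreal (- ln (q (fst z))) + 1))
              + ennreal (q (fst z)) * ennreal (-(p z * ln (p z))) \<partial>(eta \<Otimes>\<^sub>M Q))
       = (\<integral>\<^sup>+z. ennreal (q (fst z)) * (ennreal (p z) * (ennreal (-l) * ennreal (- d z) + ennreal (-F) + ennreal (- ln (q (fst z))) + 1)) \<partial>(eta \<Otimes>\<^sub>M Q))
         + (\<integral>\<^sup>+z. ennreal (q (fst z)) * ennreal (-(p z * ln (p z))) \<partial>(eta \<Otimes>\<^sub>M Q))"
      by (rule nn_integral_add) measurable
    also have "(\<integral>\<^sup>+z. ennreal (q (fst z)) * (ennreal (p z) * (ennreal (-l) * ennreal (- d z) + ennreal (-F) + ennreal (- ln (q (fst z))) + 1)) \<partial>(eta \<Otimes>\<^sub>M Q))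
       = (\<integral>\<^sup>+z. ennreal (p z) * (ennreal (-l) * ennreal (- d z) + ennreal (-F) + ennreal (- ln (q (fst z))) + 1) \<partial>(zeta \<Otimes>\<^sub>M Q))"
      by (rule intEQ) measurable
    also have "\<dots> = (\<integral>\<^sup>+z. ennreal (-l) * ennreal (- d z) + ennreal (-F) + ennreal (- ln (q (fst z))) + 1 \<partial>P)"
      by (rule intP) measurable
    also have "(\<integral>\<^sup>+z. ennreal (q (fst z)) * ennreal (-(p z * ln (p z))) \<partial>(eta \<Otimes>\<^sub>M Q)) = Am"
      unfolding Am_def by (rule intEQ) measurable
    finally show ?thesis unfolding G1 .
  qed
  have RI: "(\<integral>\<^sup>+z. ennreal (q (fst z)) * (ennreal (p z) * (ennreal (-l) * ennreal (d z) + ennreal F + ennreal (ln (q (fst z)))))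
              + ennreal (q (fst z)) * ennreal (p z * ln (p z)) + ennreal (exp (l * d z - F)) \<partial>(eta \<Otimes>\<^sub>M Q))
      = (ennreal (-l) * Ep + ennreal F + Cp) + Ap + T"
  proof -
    have "(\<integral>\<^sup>+z. ennreal (q (fst z)) * (ennreal (p z) * (ennreal (-l) * ennreal (d z) + ennreal F + ennreal (ln (q (fst z)))))
              + ennreal (q (fst z)) * ennreal (p z * ln (p z)) + ennreal (exp (l * d z - F)) \<partial>(eta \<Otimes>\<^sub>M Q))
       = (\<integral>\<^sup>+z. ennreal (q (fst z)) * (ennreal (p z) * (ennreal (-l) * ennreal (d z) + ennreal F + ennreal (ln (q (fst z))))) \<partial>(eta \<Otimes>\<^sub>M Q))
         + (\<integral>\<^sup>+z. ennreal (q (fst z)) * ennreal (p z * ln (p z)) \<partial>(eta \<Otimes>\<^sub>M Q)) + T"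
      unfolding T_def by (subst nn_integral_add, measurable)+
    also have "(\<integral>\<^sup>+z. ennreal (q (fst z)) * (ennreal (p z) * (ennreal (-l) * ennreal (d z) + ennreal F + ennreal (ln (q (fst z))))) \<partial>(eta \<Otimes>\<^sub>M Q))
       = (\<integral>\<^sup>+z. ennreal (p z) * (ennreal (-l) * ennreal (d z) + ennreal F + ennreal (ln (q (fst z)))) \<partial>(zeta \<Otimes>\<^sub>M Q))"
      by (rule intEQ) measurable
    also have "\<dots> = (\<integral>\<^sup>+z. ennreal (-l) * ennreal (d z) + ennreal F + ennreal (ln (q (fst z))) \<partial>P)"
      by (rule intP) measurable
    also have "(\<integral>\<^sup>+z. ennreal (q (fst z)) * ennreal (p z * ln (p z)) \<partial>(eta \<Otimes>\<^sub>M Q)) = Ap"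
      unfolding Ap_def by (rule intEQ) measurable
    finally show ?thesis unfolding G2 .
  qed
  have mono: "(ennreal (-l) * Em + ennreal (-F) + Cm + 1) + Am \<le> (ennreal (-l) * Ep + ennreal F + Cp) + Ap + T"
    unfolding LI[symmetric] RI[symmetric]
  proof (rule nn_integral_mono)
    fix z
    have L0: "0 \<le> -l" using l by simp
    show "ennreal (q (fst z)) * (ennreal (p z) * (ennreal (-l) * ennreal (- d z) + ennreal (-F) + ennreal (- ln (q (fst z))) + 1))
              + ennreal (q (fst z)) * ennreal (-(p z * ln (p z)))
        \<le> ennreal (q (fst z)) * (ennreal (p z) * (ennreal (-l) * ennreal (d z) + ennreal F + ennreal (ln (q (fst z)))))
              + ennreal (q (fst z)) * ennreal (p z * ln (p z)) + ennreal (exp (l * d z - F))"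
      unfolding convL[OF qnn pnn L0] convR[OF qnn pnn L0 exp_ge_zero]
      by (rule ennreal_leI[OF pointwise_real[OF qnn pnn l]])
  qed
  have dEQ: "d \<in> borel_measurable (eta \<Otimes>\<^sub>M Q)" using dm by (simp add: measurable_cong_sets[OF sEQ refl])
  have Tle: "T \<le> 1" unfolding T_def by (rule T_bound[OF E QP dEQ F sQ])
  have Ckl: "enn2ereal Cp - enn2ereal Cm = ereal D" using k1(4) D unfolding Cp_def Cm_def q_def by simp
  have Akl: "enn2ereal Ap - enn2ereal Am \<le> ereal r" using k2(4) MI unfolding MI' Ap_def Am_def p_def by simp
  have Cmf: "Cm \<noteq> \<infinity>" using k1(3) unfolding Cm_def q_def by (auto simp: top_unique)
  have Amf: "Am \<noteq> \<infinity>" using k2(3) unfolding Am_def p_def by (auto simp: top_unique)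
  have "ereal (1/l) * (ereal r + ereal D) + ereal (1/l) * ereal F \<le> enn2ereal Ep - enn2ereal Em"
    by (rule final_arith[OF l mono Tle Ckl Akl Cmf Amf])
  then show ?thesis unfolding ereal_expect_def Ep_def Em_def P_def .
qed

lemma enn_minus_nm: "enn2ereal S - ereal c \<noteq> - \<infinity>"
  using enn2ereal_nonneg[of S] by (cases "enn2ereal S") auto

theorem theorem3:
  fixes zeta eta :: "'a measure" and Y :: "'b measure" and d :: "'a \<times> 'b \<Rightarrow> real"
    and b :: ereal and r :: real
  assumes "prob_space zeta" and "prob_space eta" and "sets eta = sets zeta"
    and "d \<in> borel_measurable (zeta \<Otimes>\<^sub>M Y)"
    and "b > 0" and "r \<ge> 0"
  shows "(INF K \<in> {K. K \<in> zeta \<rightarrow>\<^sub>M prob_algebra Y \<and> mutual_info zeta Y K \<le> ereal r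
                      \<and> expect_defined (joint zeta Y K) d}.
            ereal_expect (joint zeta Y K) d)
         \<ge> (SUP l \<in> {l. - b < ereal l \<and> l < 0}.
              ereal (1 / l) * (ereal r + kl_div zeta eta) + ereal (1 / l) * phi eta Y d l)"
proof (rule SUP_least, rule INF_greatest)
  fix l K
  assume lK: "l \<in> {l. - b < ereal l \<and> l < 0}"
    and KK: "K \<in> {K. K \<in> zeta \<rightarrow>\<^sub>M prob_algebra Y \<and> mutual_info zeta Y K \<le> ereal r
                      \<and> expect_defined (joint zeta Y K) d}"
  have l: "l < 0" using lK by simp
  have K: "K \<in> zeta \<rightarrow>\<^sub>M prob_algebra Y" and MI: "mutual_info zeta Y K \<le> ereal r" using KK by auto
  note Z = assms(1) and E = assms(2) and sE = assms(3) and dm = assms(4)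
  interpret Z: prob_space zeta by fact
  interpret E: prob_space eta by fact
  obtain x0 where x0: "x0 \<in> space zeta" using Z.not_empty by blast
  have "K x0 \<in> space (prob_algebra Y)" using measurable_space[OF K x0] .
  then have "prob_space (K x0)" "sets (K x0) = sets Y" by (auto simp: space_prob_algebra)
  then have "space Y \<noteq> {}" using prob_space.not_empty sets_eq_imp_space_eq by metis
  then obtain y0 where y0: "y0 \<in> space Y" by blast
  have dEY: "d \<in> borel_measurable (eta \<Otimes>\<^sub>M Y)" using dm by (simp add: measurable_cong_sets[OF sets_pair_measure_cong[OF sE refl] refl])
  have dy[measurable]: "(\<lambda>x. d (x, y0)) \<in> borel_measurable eta"
    by (rule measurable_compose[OF measurable_Pair[OF measurable_ident_sets[OF refl] measurable_const[OF y0]] dEY])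
  let ?I = "\<integral>\<^sup>+x. ennreal (exp (l * d (x, y0))) \<partial>eta"
  have "?I \<noteq> 0"
  proof
    assume "?I = 0"
    then have "AE x in eta. ennreal (exp (l * d (x, y0))) = 0"
      by (subst nn_integral_0_iff_AE[symmetric]) measurable
    then have "AE x in eta. False" by simp
    then show False using E.AE_False by simp
  qed
  then have "ln_ennreal ?I \<noteq> - \<infinity>" by (simp add: ln_ennreal_def)
  moreover have "ln_ennreal ?I \<le> phi eta Y d l" unfolding phi_def using y0 by (rule SUP_upper)
  ultimately have phinm: "phi eta Y d l \<noteq> - \<infinity>" by auto
  have klnm: "kl_div zeta eta \<noteq> - \<infinity>" unfolding kl_div_def by (auto simp: Let_def enn_minus_nm)
  have lneg: "1 / l < 0" using l by simp
  show "ereal (1 / l) * (ereal r + kl_div zeta eta) + ereal (1 / l) * phi eta Y d l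
        \<le> ereal_expect (joint zeta Y K) d"
  proof (cases "phi eta Y d l")
    case (real F)
    show ?thesis
    proof (cases "kl_div zeta eta")
      case (real D)
      show ?thesis unfolding \<open>kl_div zeta eta = ereal D\<close> \<open>phi eta Y d l = ereal F\<close>
        by (rule core[OF Z E sE dm K MI l \<open>kl_div zeta eta = ereal D\<close> \<open>phi eta Y d l = ereal F\<close>])
    next
      case PInf
      then show ?thesis using lneg real by simp
    next
      case MInf
      then show ?thesis using klnm by simp
    qed
  next
    case PInf
    have "ereal (1 / l) * (ereal r + kl_div zeta eta) \<noteq> \<infinity>"
      using klnm lneg by (cases "kl_div zeta eta") auto
    then show ?thesis using PInf lneg by (cases "ereal (1 / l) * (ereal r + kl_div zeta eta)") auto
  next
    case MInf
    then show ?thesis using phinm by simp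
  qed
qed

end
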